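(* Fix $0<B<1$ and $H>0$, let $x(s),z(s)$ be as follows: $$x(s)=\frac1H\sqrt{1+B^2+2B\sin\!\big(Hs+\tfrac{3\pi}{2}\big)},\qquad z(s)=\int_{3\pi/(2H)}^{\,s+3\pi/(2H)}\frac{1+B\sin(Ht)}{\sqrt{1+B^2+2B\sin(Ht)}}\,dt ,$$ let $s_0=\frac1H\arccos B$ be the smallest positive zero of $x''$, let $g(s)=x(s)-\frac{x'(s)}{z'(s)}z(s)$, and set $z_0=\frac{1-B^2}{HB}$. Then: (i) if $z(s_0)<z_0$, then $g(s)>0$ for all $s\in(0,s_0)$; (ii) if $z(s_0)\ge z_0$, then there is $\bar s\in(0,s_0]$ with $g(\bar s)=g(-\bar s)=0$; with $R_0^2=x(\bar s)^2+z(\bar s)^2$, the surface $\Sigma$ obtained by rotating $\beta|_{[-\bar s,\bar s]}$, $\beta=(x,0,z)$, about the $z$-axis is a free boundary CMC annulus in the ball $\mathbb B^3_{R_0}$ of radius $R_0$ centered at the origin, and it satisfies, at every point, $$|\Phi|^2\langle\vec x,N\rangle^2\le\tfrac12\big(2+H\langle\vec x,N\rangle\big)^2,$$ with $N=(-z'\cos\theta,-z'\sin\theta,x')$ at the point $(x(s)\cos\theta,x(s)\sin\theta,z(s))$.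
   Context: Free boundary in a ball $\mathbb B^3_{R}$: interior in the open ball, boundary on the sphere of radius $R$, meeting it orthogonally. Conventions: shape operator $A$ w.r.t. $N$ defined by $\langle A(Y),Z\rangle=\langle\bar\nabla_YZ,N\rangle$; mean curvature $H=\operatorname{tr}A$ (unnormalized; for this unduloid it equals the constant $H$); $\Phi=\Pi-\frac H2g_\Sigma$, $|\Phi|^2=|A|^2-H^2/2$; $\vec x$ the position vector. *)

theory Defs
  imports "HOL-Analysis.Analysis"
begin

type_synonym psurf = "real \<times> real \<Rightarrow> real^3"

definition dS :: "psurf \<Rightarrow> psurf" where
  "dS X = (\<lambda>(s,t). vector_derivative (\<lambda>u. X (u,t)) (at s))"
definition dT :: "psurf \<Rightarrow> psurf" where
  "dT X = (\<lambda>(s,t). vector_derivative (\<lambda>u. X (s,u)) (at t))"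

definition C2_at :: "psurf \<Rightarrow> real \<times> real \<Rightarrow> bool" where
  "C2_at X p \<longleftrightarrow>
     (\<forall>Y\<in>{X, dS X, dT X}.
        (\<lambda>u. Y (u, snd p)) differentiable (at (fst p)) \<and>
        (\<lambda>u. Y (fst p, u)) differentiable (at (snd p)))"

definition fE where "fE X p = dS X p \<bullet> dS X p"
definition fF where "fF X p = dS X p \<bullet> dT X p"
definition fG where "fG X p = dT X p \<bullet> dT X p"

text \<open>Second fundamental form w.r.t. the normal field N, with the convention
  <A(Y),Z> = <Dbar_Y Z, N>.\<close>
definition sffL where "sffL X N p = dS (dS X) p \<bullet> N p"
definition sffM where "sffM X N p = dT (dS X) p \<bullet> N p"
definition sffN where "sffN X N p = dT (dT X) p \<bullet> N p"

text \<open>Entries of the shape operator S = I^{-1} II (in the coordinate frame).\<close>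
definition shapeop :: "psurf \<Rightarrow> psurf \<Rightarrow> real \<times> real \<Rightarrow> nat \<Rightarrow> nat \<Rightarrow> real" where
  "shapeop X N p i j =
    (let E = fE X p; F = fF X p; G = fG X p;
         l = sffL X N p; m = sffM X N p; n = sffN X N p; D = E*G - F^2 in
     if i = 1 \<and> j = 1 then (G*l - F*m)/D
     else if i = 1 \<and> j = 2 then (G*m - F*n)/D
     else if i = 2 \<and> j = 1 then (E*m - F*l)/D
     else (E*n - F*m)/D)"

text \<open>Unnormalized mean curvature H = tr A.\<close>
definition mean_curv :: "psurf \<Rightarrow> psurf \<Rightarrow> real \<times> real \<Rightarrow> real" where
  "mean_curv X N p = shapeop X N p 1 1 + shapeop X N p 2 2"

text \<open>|A|^2 = tr (A^2).\<close>
definition normA_sq :: "psurf \<Rightarrow> psurf \<Rightarrow> real \<times> real \<Rightarrow> real" where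
  "normA_sq X N p = (shapeop X N p 1 1)^2 + 2 * shapeop X N p 1 2 * shapeop X N p 2 1
                    + (shapeop X N p 2 2)^2"

definition Phi_sq :: "psurf \<Rightarrow> psurf \<Rightarrow> real \<times> real \<Rightarrow> real" where
  "Phi_sq X N p = normA_sq X N p - (mean_curv X N p)^2 / 2"

text \<open>X restricted to [a,b] x R, 2pi-periodic in theta, is an embedded annulus
  (injective on [a,b] x [0,2pi), hence a homeomorphism of [a,b] x S^1 onto its image),
  immersed and C^2, with unit normal field N, with constant mean curvature H,
  and free boundary in the ball of radius R centred at 0: interior in the open ball,
  boundary on the sphere, meeting it orthogonally.\<close>
definition free_boundary_CMC_annulus ::
  "psurf \<Rightarrow> psurf \<Rightarrow> real \<Rightarrow> real \<Rightarrow> real \<Rightarrow> real \<Rightarrow> bool" where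
  "free_boundary_CMC_annulus X N H a b R \<longleftrightarrow>
     a < b \<and> R > 0 \<and>
     (\<forall>s t. X (s, t + 2*pi) = X (s, t)) \<and>
     inj_on X ({a..b} \<times> {0..<2*pi}) \<and>
     (\<forall>s\<in>{a..b}. \<forall>t.
        C2_at X (s,t) \<and>
        cross3 (dS X (s,t)) (dT X (s,t)) \<noteq> 0 \<and>
        norm (N (s,t)) = 1 \<and> N (s,t) \<bullet> dS X (s,t) = 0 \<and> N (s,t) \<bullet> dT X (s,t) = 0 \<and>
        mean_curv X N (s,t) = H) \<and>
     (\<forall>s\<in>{a<..<b}. \<forall>t. norm (X (s,t)) < R) \<and>
     (\<forall>s\<in>{a,b}. \<forall>t. norm (X (s,t)) = R \<and> X (s,t) \<bullet> N (s,t) = 0)"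

definition ux :: "real \<Rightarrow> real \<Rightarrow> real \<Rightarrow> real" where
  "ux B H s = (1/H) * sqrt (1 + B^2 + 2*B* sin (H* s + 3*pi/2))"

definition uz_integrand :: "real \<Rightarrow> real \<Rightarrow> real \<Rightarrow> real" where
  "uz_integrand B H t = (1 + B* sin (H * t)) / sqrt (1 + B^2 + 2*B* sin (H * t))"

definition uz :: "real \<Rightarrow> real \<Rightarrow> real \<Rightarrow> real" where
  "uz B H s = (let c = 3*pi/(2*H) in
     if 0 \<le> s then integral {c..s+c} (uz_integrand B H)
     else - integral {s+c..c} (uz_integrand B H))"

definition ug :: "real \<Rightarrow> real \<Rightarrow> real \<Rightarrow> real" where
  "ug B H s = ux B H s - deriv (ux B H) s / deriv (uz B H) s * uz B H s"

definition rot_surf :: "(real \<Rightarrow> real) \<Rightarrow> (real \<Rightarrow> real) \<Rightarrow> psurf" where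
  "rot_surf x z = (\<lambda>(s,t). vector [x s * cos t, x s * sin t, z s])"

definition rot_normal :: "(real \<Rightarrow> real) \<Rightarrow> (real \<Rightarrow> real) \<Rightarrow> psurf" where
  "rot_normal x z = (\<lambda>(s,t). vector [- deriv z s * cos t, - deriv z s * sin t, deriv x s])"

end

theory Submission imports Defs begin

lemma vec3_decomp: "(vector [a,b,c] :: real^3) = a *\<^sub>R vector [1,0,0] + b *\<^sub>R vector [0,1,0] + c *\<^sub>R vector[0,0,1]"
  by (simp add: vec_eq_iff forall_3 vector_3)

lemma vec3_deriv:
  assumes "(a has_real_derivative a') (at s)" "(b has_real_derivative b') (at s)" "(c has_real_derivative c') (at s)"
  shows "((\<lambda>u. vector [a u, b u, c u] :: real^3) has_vector_derivative vector [a', b', c']) (at s)"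
proof -
  have "((\<lambda>u. a u *\<^sub>R (vector [1,0,0]::real^3) + b u *\<^sub>R vector [0,1,0] + c u *\<^sub>R vector[0,0,1]) has_vector_derivative
     a' *\<^sub>R (vector [1,0,0]::real^3) + b' *\<^sub>R vector [0,1,0] + c' *\<^sub>R vector[0,0,1]) (at s)"
    using assms by (auto intro!: derivative_eq_intros)
  then show ?thesis by (simp only: vec3_decomp[symmetric])
qed

lemma inner3: "(vector [a,b,c] :: real^3) \<bullet> vector [d,e,f] = a*d+b*e+c*f"
  by (simp add: inner_vec_def sum_3 vector_3)

lemma norm3: "norm (vector [a,b,c] :: real^3) = sqrt (a^2+b^2+c^2)"
  by (simp add: norm_eq_sqrt_inner inner3 power2_eq_square)

lemma cross3_vec: "cross3 (vector [a,b,c]) (vector [d,e,f]) = vector [b*f - c*e, c*d - a*f, a*e - b*d]"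
  by (simp add: cross3_def vector_3)

lemma vec3_eq0: "(vector [a,b,c] :: real^3) = 0 \<longleftrightarrow> a = 0 \<and> b = 0 \<and> c = 0"
  by (auto simp: vec_eq_iff forall_3 vector_3)

lemma sin_shift: "sin (y + 3*pi/2) = - cos y"
proof -
  have e: "3*pi/2 = pi/2 + pi" by simp
  have s1: "sin (3*pi/2) = -1" unfolding e by (simp only: sin_periodic_pi sin_pi_half)
  have c1: "cos (3*pi/2) = 0" unfolding e by (simp only: cos_periodic_pi cos_pi_half)
  show ?thesis by (simp add: sin_add s1 c1)
qed

definition Dd :: "real \<Rightarrow> real \<Rightarrow> real \<Rightarrow> real" where "Dd B H s = 1 + B^2 - 2 * B * cos(H * s)"
definition qf :: "real \<Rightarrow> real \<Rightarrow> real \<Rightarrow> real" where "qf B H s = sqrt (Dd B H s)"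
definition x1f :: "real \<Rightarrow> real \<Rightarrow> real \<Rightarrow> real" where "x1f B H s = B * sin(H * s) / qf B H s"
definition x2f :: "real \<Rightarrow> real \<Rightarrow> real \<Rightarrow> real" where "x2f B H s = B * H * (cos(H * s) - B) * (1 - B * cos(H * s)) / (Dd B H s * qf B H s)"
definition z1f :: "real \<Rightarrow> real \<Rightarrow> real \<Rightarrow> real" where "z1f B H s = (1 - B * cos(H * s)) / qf B H s"
definition z2f :: "real \<Rightarrow> real \<Rightarrow> real \<Rightarrow> real" where "z2f B H s = B^2 * H * sin(H * s) * (B - cos(H * s)) / (Dd B H s * qf B H s)"

locale und =
  fixes B H :: real
  assumes B0: "0<B" and B1: "B<1" and H0: "0<H"
begin

lemma ux_eq: "ux B H s = qf B H s / H"
  by (simp add: ux_def qf_def Dd_def sin_shift)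

lemma ux_fun: "ux B H = (\<lambda>s. qf B H s / H)"
  using ux_eq by auto

lemma Dd_ge: "Dd B H s \<ge> (1-B)^2"
proof -
  have "B * cos (H * s) \<le> B" using B0 by (simp add: mult_left_le)
  then show ?thesis by (simp add: Dd_def power2_eq_square algebra_simps)
qed

lemma Dd_pos: "Dd B H s > 0"
proof -
  have "0 < (1-B)^2" using B1 by simp
  then show ?thesis using Dd_ge[of s] by linarith
qed

lemma q_pos: "qf B H s > 0"
  using Dd_pos by (simp add: qf_def)

lemma q_sq: "qf B H s * qf B H s = Dd B H s"
  using Dd_pos[of s] by (simp add: qf_def)

lemma sc: "sin (H * s) ^ 2 = 1 - cos (H * s) ^ 2"
  by (simp add: sin_squared_eq)

lemma Dd_deriv: "(Dd B H has_real_derivative 2 * B * H * sin(H * s)) (at s)"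
  unfolding Dd_def[abs_def]
  by (auto intro!: derivative_eq_intros)

lemma q_deriv: "(qf B H has_real_derivative B * H * sin(H * s) / qf B H s) (at s)"
proof -
  have "((\<lambda>s. sqrt (Dd B H s)) has_real_derivative inverse (sqrt (Dd B H s)) / 2 * (2 * B * H * sin(H * s))) (at s)"
    by (rule DERIV_chain2[OF DERIV_real_sqrt[OF Dd_pos] Dd_deriv])
  then show ?thesis unfolding qf_def[abs_def] by (simp add: field_simps)
qed

lemma ux_deriv: "(ux B H has_real_derivative x1f B H s) (at s)"
  unfolding ux_fun x1f_def
  apply (rule derivative_eq_intros q_deriv refl)+
  using H0 q_pos[of s] by (auto simp: field_simps)

lemma x1_deriv: "(x1f B H has_real_derivative x2f B H s) (at s)"
  unfolding x1f_def[abs_def] x2f_def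
  apply (rule derivative_eq_intros q_deriv refl)+
  apply (use q_pos[of s] in simp)
  subgoal
  proof -
    have h1: "qf B H s * qf B H s = 1 + B^2 - 2 * B * cos(H * s)" using q_sq[of s] by (simp add: Dd_def)
    have h2: "sin (H * s) * sin (H * s) = 1 - cos (H * s) * cos (H * s)" using sc[of s] by (simp add: power2_eq_square)
    have "qf B H s \<noteq> 0" "Dd B H s \<noteq> 0" using q_pos[of s] Dd_pos[of s] by auto
    then show ?thesis apply (simp add: divide_simps) apply (unfold Dd_def) using h1 h2 by algebra
  qed
  done

lemma z1_deriv: "(z1f B H has_real_derivative z2f B H s) (at s)"
  unfolding z1f_def[abs_def] z2f_def
  apply (rule derivative_eq_intros q_deriv refl)+
  apply (use q_pos[of s] in simp)
  subgoal
  proof -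
    have h1: "qf B H s * qf B H s = 1 + B^2 - 2 * B * cos(H * s)" using q_sq[of s] by (simp add: Dd_def)
    have h2: "sin (H * s) * sin (H * s) = 1 - cos (H * s) * cos (H * s)" using sc[of s] by (simp add: power2_eq_square)
    have "qf B H s \<noteq> 0" "Dd B H s \<noteq> 0" using q_pos[of s] Dd_pos[of s] by auto
    then show ?thesis apply (simp add: divide_simps) apply (unfold Dd_def) using h1 h2 by algebra
  qed
  done

lemma integrand_cont: "continuous_on UNIV (uz_integrand B H)"
proof -
  have "\<And>t. 1 + B^2 + 2 * B * sin (H * t) > 0"
  proof -
    fix t
    have "- B \<le> B * sin (H * t)" using mult_left_mono[OF sin_ge_minus_one less_imp_le[OF B0]] by simp
    then show "1 + B^2 + 2 * B * sin (H * t) > 0" 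
    proof -
      have "0 < (1-B)^2" using B1 by simp
      moreover have "(1-B)^2 = 1 + B^2 - 2 * B" by (simp add: power2_eq_square algebra_simps)
      ultimately show ?thesis using \<open>- B \<le> B * sin (H * t)\<close> by linarith
    qed
  qed
  then have p: "\<And>t. 1 + B^2 + 2 * B * sin (H * t) \<noteq> 0" by (metis less_irrefl)
  then show ?thesis unfolding uz_integrand_def[abs_def]
    by (intro continuous_intros) (auto simp: p)
qed

lemma integrand_shift: "uz_integrand B H (s + 3*pi/(2*H)) = z1f B H s"
proof -
  have "H * (s + 3*pi/(2*H)) = H * s + 3*pi/2" using H0 by (simp add: field_simps)
  then show ?thesis by (simp add: uz_integrand_def z1f_def qf_def Dd_def sin_shift)
qed

lemma uz0: "uz B H 0 = 0"
  by (simp add: uz_def)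

lemma uz_deriv: "(uz B H has_real_derivative z1f B H s) (at s)"
proof -
  define f where "f = uz_integrand B H"
  define c where "c = 3*pi/(2*H)"
  define a where "a = min c (s+c) - 1"
  define F where "F = (\<lambda>t. integral {a..t} f)"
  have fc: "continuous_on S f" for S unfolding f_def by (rule continuous_on_subset[OF integrand_cont]) simp
  have fi: "f integrable_on {u..v}" for u v by (rule integrable_continuous_real[OF fc])
  have eq: "uz B H r = F (r + c) - F c" if "r \<in> {a - c<..}" for r
  proof (cases "0 \<le> r")
    case True
    have "a \<le> c" unfolding a_def by auto
    from Henstock_Kurzweil_Integration.integral_combine[OF this _ fi[of a "r+c"]] True
    have "integral {a..c} f + integral {c..r+c} f = integral {a..r+c} f" by auto
    then show ?thesis using True unfolding uz_def F_def c_def[symmetric] f_def[symmetric] Let_def by auto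
  next
    case False
    have "a \<le> r + c" using that by auto
    from Henstock_Kurzweil_Integration.integral_combine[OF this _ fi[of a "c"]] False
    have "integral {a..r+c} f + integral {r+c..c} f = integral {a..c} f" by auto
    then show ?thesis using False unfolding uz_def F_def c_def[symmetric] f_def[symmetric] Let_def by auto
  qed
  have "(F has_real_derivative f (s+c)) (at (s+c) within {a..s+c+1})"
    unfolding F_def by (rule integral_has_real_derivative[OF fc]) (auto simp: a_def)
  moreover have "at (s+c) within {a..s+c+1} = at (s+c)"
    by (rule at_within_Icc_at) (auto simp: a_def)
  ultimately have dF: "(F has_real_derivative f (s+c)) (at (s+c))" by simp
  have d1: "((\<lambda>r. r + c) has_real_derivative 1) (at s)" by (auto intro!: derivative_eq_intros)
  have "((\<lambda>r. F (r + c) - F c) has_real_derivative f (s+c) * 1 - 0) (at s)"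
    by (rule DERIV_diff[OF DERIV_chain2[OF dF d1] DERIV_const])
  then have "((\<lambda>r. F (r + c) - F c) has_real_derivative f (s+c)) (at s)" by simp
  then have "(uz B H has_real_derivative f (s+c)) (at s)"
    by (rule has_field_derivative_transform_within_open[where S = "{a - c<..}"])
       (auto simp: eq a_def)
  then show ?thesis using integrand_shift by (simp add: f_def c_def)
qed


lemma qf_even: "qf B H (-s) = qf B H s"
  by (simp add: qf_def Dd_def)
lemma ux_even: "ux B H (-s) = ux B H s"
  by (simp add: ux_eq qf_even)
lemma x1_odd: "x1f B H (-s) = - x1f B H s"
  by (simp add: x1f_def qf_even)
lemma z1_even: "z1f B H (-s) = z1f B H s"
  by (simp add: z1f_def qf_even)

lemma z1_pos: "z1f B H s > 0"
proof -
  have "B * cos (H * s) \<le> B" using B0 by (simp add: mult_left_le)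
  then show ?thesis using B1 q_pos[of s] by (simp add: z1f_def)
qed

lemma ux_pos: "ux B H s > 0"
  using q_pos[of s] H0 by (simp add: ux_eq)

lemma uz_odd: "uz B H (-s) = - uz B H s"
proof -
  have "\<forall>r. ((\<lambda>r. uz B H r + uz B H (-r)) has_real_derivative 0) (at r)"
  proof
    fix r
    have d: "((\<lambda>r. - r) has_real_derivative -1) (at r)" by (auto intro!: derivative_eq_intros)
    have "((\<lambda>r. uz B H r + uz B H (-r)) has_real_derivative z1f B H r + z1f B H (-r) * -1) (at r)"
      by (rule DERIV_add[OF uz_deriv DERIV_chain2[OF uz_deriv d]])
    then show "((\<lambda>r. uz B H r + uz B H (-r)) has_real_derivative 0) (at r)" by (simp add: z1_even)
  qed
  from DERIV_isconst_all[OF this, of s 0] show ?thesis by (simp add: uz0)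
qed

lemma uz_mono: "a < b \<Longrightarrow> uz B H a < uz B H b"
  by (rule DERIV_pos_imp_increasing) (use uz_deriv z1_pos in blast)+

lemma uz_pos: "s > 0 \<Longrightarrow> uz B H s > 0"
  using uz_mono[of 0 s] uz0 by simp

definition phi where "phi s = ux B H s * z1f B H s - x1f B H s * uz B H s"

lemma phi_even: "phi (-s) = phi s"
  by (simp add: phi_def ux_even z1_even x1_odd uz_odd)

lemma phi_deriv: "(phi has_real_derivative ux B H s * z2f B H s - x2f B H s * uz B H s) (at s)"
proof -
  have "(phi has_real_derivative (ux B H s * z2f B H s + x1f B H s * z1f B H s) - (x1f B H s * z1f B H s + x2f B H s * uz B H s)) (at s)"
    unfolding phi_def[abs_def]
    by (rule DERIV_diff[OF DERIV_mult[OF ux_deriv z1_deriv] DERIV_mult[OF x1_deriv uz_deriv], THEN DERIV_cong]) (simp add: algebra_simps)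
  then show ?thesis by (simp add: algebra_simps)
qed

lemma phi_cont: "continuous_on S phi"
  using phi_deriv by (meson DERIV_continuous continuous_at_imp_continuous_on)

lemma arccos_facts: "0 < arccos B" "arccos B < pi/2" "cos (arccos B) = B" "sin (arccos B) = sqrt (1 - B^2)"
proof -
  show "0 < arccos B" using arccos_lt_bounded[of B] B0 B1 by auto
  have "arccos B < arccos 0" by (rule arccos_less_arccos) (use B0 B1 in auto)
  then show "arccos B < pi/2" by simp
  show "cos (arccos B) = B" using B0 B1 by simp
  show "sin (arccos B) = sqrt (1 - B^2)" using B0 B1 by (simp add: sin_arccos)
qed

lemma in_range: assumes "0 < s" "s < arccos B / H"
  shows "cos (H * s) > B" "sin (H * s) > 0"
proof -
  have a: "0 < H * s" "H * s < arccos B" using assms H0 by (auto simp: field_simps)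
  have "cos (arccos B) < cos (H * s)"
    by (rule cos_monotone_0_pi) (use a arccos_facts in auto)
  then show "cos (H * s) > B" using arccos_facts by simp
  show "sin (H * s) > 0" by (rule sin_gt_zero) (use a arccos_facts in auto)
qed

lemma in_range2: assumes "0 < s" "s \<le> arccos B / H"
  shows "cos (H * s) \<ge> B" "sin (H * s) > 0"
proof -
  have a: "0 < H * s" "H * s \<le> arccos B" using assms H0 by (auto simp: field_simps)
  have "cos (arccos B) \<le> cos (H * s)"
    by (rule cos_monotone_0_pi_le) (use a arccos_facts in auto)
  then show "cos (H * s) \<ge> B" using arccos_facts by simp
  show "sin (H * s) > 0" by (rule sin_gt_zero) (use a arccos_facts in auto)
qed

lemma phi_deriv_neg: assumes "0 < s" "s < arccos B / H"
  shows "ux B H s * z2f B H s - x2f B H s * uz B H s < 0"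
proof -
  note r = in_range[OF assms]
  have "z2f B H s < 0"
    unfolding z2f_def using r B0 H0 Dd_pos[of s] q_pos[of s]
    by (intro divide_neg_pos mult_pos_neg mult_pos_pos) auto
  moreover have "x2f B H s > 0"
  proof -
    have bc: "B * cos (H * s) \<le> B" using B0 by (simp add: mult_left_le)
    then have bc2: "0 < 1 - B * cos (H * s)" using B1 by linarith
    show ?thesis
      unfolding x2f_def using bc2 r B0 B1 H0 Dd_pos[of s] q_pos[of s]
      by (intro divide_pos_pos mult_pos_pos) auto
  qed
  ultimately show ?thesis using ux_pos[of s] uz_pos[of s] assms(1)
  proof -
    have "ux B H s * z2f B H s < 0" using ux_pos[of s] \<open>z2f B H s < 0\<close> by (rule mult_pos_neg)
    moreover have "x2f B H s * uz B H s > 0" using \<open>x2f B H s > 0\<close> uz_pos[of s] assms(1) by simp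
    ultimately show ?thesis by linarith
  qed
qed

lemma phi_decr: assumes "0 \<le> a" "a < b" "b \<le> arccos B / H"
  shows "phi a > phi b"
  by (rule DERIV_neg_imp_decreasing_open[OF assms(2)])
     (use phi_deriv phi_deriv_neg phi_cont assms in \<open>auto intro!: exI\<close>)

lemma phi0: "phi 0 = (1 - B) / H"
proof -
  have "Dd B H 0 = (1 - B)^2" by (simp add: Dd_def power2_eq_square algebra_simps)
  then have "qf B H 0 = 1 - B" using B1 by (simp add: qf_def)
  moreover have "1 - B \<noteq> 0" "H \<noteq> 0" using B1 H0 by auto
  ultimately show ?thesis by (simp add: phi_def ux_eq z1f_def uz0)
qed

lemma phi_s0: "phi (arccos B / H) = (1 - B^2) / H - B * uz B H (arccos B / H)"
proof -
  have hne: "H \<noteq> 0" using H0 by simp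
  have e: "H * (arccos B / H) = arccos B" using hne by simp
  have "Dd B H (arccos B / H) = 1 - B^2" unfolding Dd_def e using arccos_facts by (simp add: power2_eq_square)
  then have q: "qf B H (arccos B / H) = sqrt (1 - B^2)" by (simp add: qf_def)
  have q2: "sqrt (1 - B^2) * sqrt (1 - B^2) = 1 - B^2" using B0 B1
    by (simp add: abs_square_le_1 less_imp_le)
  have qp: "sqrt (1 - B^2) > 0" using B0 B1 by (simp add: abs_square_less_1)
  show ?thesis
    unfolding phi_def ux_eq z1f_def x1f_def q e arccos_facts
    using qp q2 H0 by (simp add: field_simps power2_eq_square)
qed

lemma ug_eq: "ug B H s = phi s / z1f B H s"
proof -
  have "deriv (ux B H) s = x1f B H s" "deriv (uz B H) s = z1f B H s"
    using DERIV_imp_deriv[OF ux_deriv] DERIV_imp_deriv[OF uz_deriv] by auto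
  then show ?thesis using z1_pos[of s] by (simp add: ug_def phi_def field_simps)
qed


abbreviation "XX \<equiv> rot_surf (ux B H) (uz B H)"
abbreviation "NN \<equiv> rot_normal (ux B H) (uz B H)"

lemma vd3: "(a has_real_derivative a') (at s) \<Longrightarrow> (b has_real_derivative b') (at s) \<Longrightarrow> (c has_real_derivative c') (at s)
  \<Longrightarrow> vector_derivative (\<lambda>u. vector [a u, b u, c u] :: real^3) (at s) = vector [a',b',c']"
  by (rule vector_derivative_at[OF vec3_deriv])

lemmas dintros = derivative_eq_intros ux_deriv uz_deriv x1_deriv z1_deriv

lemma dS_X: "dS XX = (\<lambda>(s,t). vector [x1f B H s * cos t, x1f B H s * sin t, z1f B H s])"
  unfolding dS_def rot_surf_def
  by (auto intro!: vd3 dintros)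

lemma dT_X: "dT XX = (\<lambda>(s,t). vector [- (ux B H s * sin t), ux B H s * cos t, 0])"
  unfolding dT_def rot_surf_def
  by (auto intro!: vd3 dintros)

lemma dSS_X: "dS (dS XX) = (\<lambda>(s,t). vector [x2f B H s * cos t, x2f B H s * sin t, z2f B H s])"
  unfolding dS_X unfolding dS_def
  by (auto intro!: vd3 dintros)

lemma dTS_X: "dT (dS XX) = (\<lambda>(s,t). vector [- (x1f B H s * sin t), x1f B H s * cos t, 0])"
  unfolding dS_X unfolding dT_def
  by (auto intro!: vd3 dintros)

lemma dTT_X: "dT (dT XX) = (\<lambda>(s,t). vector [- (ux B H s * cos t), - (ux B H s * sin t), 0])"
  unfolding dT_X unfolding dT_def
  by (auto intro!: vd3 dintros)

lemma N_eq: "NN = (\<lambda>(s,t). vector [- (z1f B H s * cos t), - (z1f B H s * sin t), x1f B H s])"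
  unfolding rot_normal_def using DERIV_imp_deriv[OF ux_deriv] DERIV_imp_deriv[OF uz_deriv] by auto

lemma C2: "C2_at XX p"
proof -
  obtain s t where p: "p = (s,t)" by fastforce
  show ?thesis
    unfolding C2_at_def p dT_X dS_X
    by (auto simp: rot_surf_def intro!: differentiableI_vector[OF vec3_deriv] dintros)
qed

lemma x1z1: "x1f B H s ^ 2 + z1f B H s ^ 2 = 1"
proof -
  have h1: "qf B H s * qf B H s = 1 + B^2 - 2 * B * cos(H * s)" using q_sq[of s] by (simp add: Dd_def)
  have h2: "sin (H * s) * sin (H * s) = 1 - cos (H * s) * cos (H * s)" using sc[of s] by (simp add: power2_eq_square)
  have "qf B H s \<noteq> 0" using q_pos[of s] by auto
  then show ?thesis unfolding x1f_def z1f_def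
    apply (simp add: divide_simps power2_eq_square) using h1 h2 by algebra
qed

lemma L_eq: "z2f B H s * x1f B H s - x2f B H s * z1f B H s = B * H * (B - cos (H * s)) / Dd B H s"
proof -
  have h1: "qf B H s * qf B H s = 1 + B^2 - 2 * B * cos(H * s)" using q_sq[of s] by (simp add: Dd_def)
  have h2: "sin (H * s) * sin (H * s) = 1 - cos (H * s) * cos (H * s)" using sc[of s] by (simp add: power2_eq_square)
  have "qf B H s \<noteq> 0" "Dd B H s \<noteq> 0" using q_pos[of s] Dd_pos[of s] by auto
  then show ?thesis unfolding x1f_def z1f_def x2f_def z2f_def
    apply (simp add: divide_simps power2_eq_square) apply (unfold Dd_def) using h1 h2 by algebra
qed

lemma k2_eq: "z1f B H s / ux B H s = H * (1 - B * cos (H * s)) / Dd B H s"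
  using q_pos[of s] Dd_pos[of s] H0 q_sq[of s] by (simp add: z1f_def ux_eq field_simps)

lemma geom:
  shows "fE XX (s,t) = 1" "fF XX (s,t) = 0" "fG XX (s,t) = (ux B H s)^2"
   and "sffL XX NN (s,t) = B * H * (B - cos (H * s)) / Dd B H s"
   and "sffM XX NN (s,t) = 0" "sffN XX NN (s,t) = ux B H s * z1f B H s"
proof -
  have cs: "cos t * cos t = 1 - sin t * sin t" using sin_cos_squared_add[of t] unfolding power2_eq_square by linarith
  have cs2: "(cos t)^2 = 1 - (sin t)^2" by (simp add: cos_squared_eq)
  show "fE XX (s,t) = 1" unfolding fE_def dS_X apply (simp add: inner3)
    using x1z1[of s] cs by algebra
  show "fF XX (s,t) = 0" unfolding fF_def dS_X dT_X
    by (simp add: inner3 algebra_simps)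
  show "fG XX (s,t) = (ux B H s)^2" unfolding fG_def dT_X apply (simp add: inner3)
    using cs by algebra
  show "sffL XX NN (s,t) = B * H * (B - cos (H * s)) / Dd B H s" unfolding sffL_def dSS_X N_eq L_eq[symmetric]
    apply (simp add: inner3) using cs by algebra
  show "sffM XX NN (s,t) = 0" unfolding sffM_def dTS_X N_eq
    by (simp add: inner3 algebra_simps)
  show "sffN XX NN (s,t) = ux B H s * z1f B H s" unfolding sffN_def dTT_X N_eq
    apply (simp add: inner3) using cs by algebra
qed


lemma shape:
  shows "shapeop XX NN (s,t) 1 1 = B * H * (B - cos (H * s)) / Dd B H s"
    "shapeop XX NN (s,t) 1 2 = 0" "shapeop XX NN (s,t) 2 1 = 0"
    "shapeop XX NN (s,t) 2 2 = H * (1 - B * cos (H * s)) / Dd B H s"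
proof -
  have u: "ux B H s \<noteq> 0" using ux_pos[of s] by auto
  show "shapeop XX NN (s,t) 1 1 = B * H * (B - cos (H * s)) / Dd B H s"
    unfolding shapeop_def Let_def geom using u by (simp add: power2_eq_square)
  show "shapeop XX NN (s,t) 1 2 = 0" "shapeop XX NN (s,t) 2 1 = 0"
    unfolding shapeop_def Let_def geom using u by (simp_all add: power2_eq_square)
  show "shapeop XX NN (s,t) 2 2 = H * (1 - B * cos (H * s)) / Dd B H s"
    unfolding shapeop_def Let_def geom k2_eq[symmetric] using u by (simp add: power2_eq_square)
qed

lemma mean_H: "mean_curv XX NN (s,t) = H"
proof -
  have "Dd B H s \<noteq> 0" using Dd_pos[of s] by auto
  then show ?thesis unfolding mean_curv_def shape
    by (simp add: divide_simps Dd_def) (simp add: algebra_simps power2_eq_square)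
qed

lemma Phi_eq: "Phi_sq XX NN (s,t) = (H * (1 - B^2) / Dd B H s)^2 / 2"
proof -
  have "Dd B H s \<noteq> 0" using Dd_pos[of s] by auto
  then show ?thesis unfolding Phi_sq_def normA_sq_def mean_curv_def shape
    by (simp add: divide_simps Dd_def) (simp add: algebra_simps power2_eq_square)
qed

lemma XN: "XX (s,t) \<bullet> NN (s,t) = - phi s"
proof -
  have cs: "cos t * cos t = 1 - sin t * sin t" using sin_cos_squared_add[of t] unfolding power2_eq_square by linarith
  show ?thesis unfolding N_eq phi_def apply (simp add: rot_surf_def inner3)
    using cs by algebra
qed

lemma normX: "norm (XX (s,t)) = sqrt ((ux B H s)^2 + (uz B H s)^2)"
proof -
  have cs: "cos t * cos t = 1 - sin t * sin t" using sin_cos_squared_add[of t] unfolding power2_eq_square by linarith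
  show ?thesis apply (simp add: rot_surf_def norm3)
    using cs by algebra
qed

lemma normN: "norm (NN (s,t)) = 1"
proof -
  have cs: "cos t * cos t = 1 - sin t * sin t" using sin_cos_squared_add[of t] unfolding power2_eq_square by linarith
  have "(- (z1f B H s * cos t))^2 + (- (z1f B H s * sin t))^2 + (x1f B H s)^2 = 1"
    using x1z1[of s] cs by algebra
  then show ?thesis unfolding N_eq by (simp add: norm3)
qed

lemma N_perp: "NN (s,t) \<bullet> dS XX (s,t) = 0" "NN (s,t) \<bullet> dT XX (s,t) = 0"
proof -
  have cs: "cos t * cos t = 1 - sin t * sin t" using sin_cos_squared_add[of t] unfolding power2_eq_square by linarith
  show "NN (s,t) \<bullet> dS XX (s,t) = 0" unfolding N_eq dS_X apply (simp add: inner3)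
    using cs by algebra
  show "NN (s,t) \<bullet> dT XX (s,t) = 0" unfolding N_eq dT_X by (simp add: inner3 algebra_simps cs)
qed

lemma cross_nz: "cross3 (dS XX (s,t)) (dT XX (s,t)) \<noteq> 0"
proof
  assume "cross3 (dS XX (s,t)) (dT XX (s,t)) = 0"
  then have a: "z1f B H s * ux B H s * cos t = 0" "z1f B H s * ux B H s * sin t = 0"
    unfolding dS_X dT_X by (simp_all add: cross3_vec vec3_eq0 algebra_simps)
  have "z1f B H s * ux B H s \<noteq> 0" using z1_pos[of s] ux_pos[of s] by auto
  then have "cos t = 0" "sin t = 0" using a by auto
  then show False using sin_cos_squared_add[of t] by simp
qed

lemma X_periodic: "XX (s, t + 2*pi) = XX (s,t)"
  by (simp add: rot_surf_def)

lemma X_inj: "inj_on XX (S \<times> {0..<2*pi})"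
proof (rule inj_onI, clarify)
  fix s t s' t'
  assume t: "t \<in> {0..<2*pi}" "t' \<in> {0..<2*pi}" and eq: "XX (s,t) = XX (s',t')"
  then have e: "ux B H s * cos t = ux B H s' * cos t'" "ux B H s * sin t = ux B H s' * sin t'" "uz B H s = uz B H s'"
    by (simp_all add: rot_surf_def vec_eq_iff forall_3 vector_3)
  have ss: "s = s'"
  proof (rule ccontr)
    assume "s \<noteq> s'"
    then show False using uz_mono[of s s'] uz_mono[of s' s] e(3) by linarith
  qed
  have "ux B H s \<noteq> 0" using ux_pos[of s] by auto
  then have "cos t = cos t'" "sin t = sin t'" using e ss by auto
  then obtain n :: int where n: "t = t' + 2 * pi * n" using sin_cos_eq_iff by metis
  have "n = 0"
  proof -
    have pos: "0 < 2 * pi" by simp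
    have t2: "0 \<le> t" "t < 2*pi" "0 \<le> t'" "t' < 2*pi" using t by auto
    have "(2 * pi) * real_of_int n < (2 * pi) * 1" using n t2 by linarith
    moreover have "(2 * pi) * (-1) < (2 * pi) * real_of_int n" using n t2 by linarith
    ultimately have "(2 * pi) * real_of_int n < (2 * pi) * 1" "(2 * pi) * (-1) < (2 * pi) * real_of_int n" by auto
    then have "real_of_int n < 1" "-1 < real_of_int n" by (simp_all only: mult_less_cancel_left_pos[OF pos])
    then have "n < 1" "-1 < n" by simp_all
    then show ?thesis by linarith
  qed
  then show "s = s' \<and> t = t'" using ss n by simp
qed

lemma x1_pos: assumes "0 < s" "s < arccos B / H" shows "x1f B H s > 0"
  using in_range[OF assms] B0 q_pos[of s] by (simp add: x1f_def)

lemma psi_incr: assumes "0 \<le> a" "a < b" "b \<le> arccos B / H"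
  shows "(ux B H a)^2 + (uz B H a)^2 < (ux B H b)^2 + (uz B H b)^2"
proof (rule DERIV_pos_imp_increasing_open[OF assms(2)])
  fix x assume x: "a < x" "x < b"
  have "((\<lambda>s. (ux B H s)^2 + (uz B H s)^2) has_real_derivative
     2 * ux B H x * x1f B H x + 2 * uz B H x * z1f B H x) (at x)"
    by (auto intro!: dintros)
  moreover have "2 * ux B H x * x1f B H x + 2 * uz B H x * z1f B H x > 0"
    using ux_pos[of x] x1_pos[of x] uz_pos[of x] z1_pos[of x] x assms
    by (intro add_pos_pos mult_pos_pos) auto
  ultimately show "\<exists>y. ((\<lambda>s. (ux B H s)^2 + (uz B H s)^2) has_real_derivative y) (at x) \<and> 0 < y" by blast
next
  show "continuous_on {a..b} (\<lambda>s. (ux B H s)^2 + (uz B H s)^2)"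
    using ux_deriv uz_deriv
    by (intro continuous_intros) (meson DERIV_continuous continuous_at_imp_continuous_on)+
qed

lemma psi_even: "(ux B H (-s))^2 + (uz B H (-s))^2 = (ux B H s)^2 + (uz B H s)^2"
  by (simp add: ux_even uz_odd)

end

lemma final_ineq:
  fixes B D w :: real
  assumes "0 < B" "B < 1" "D \<ge> (1-B)^2" "0 \<le> w" "w \<le> 1 - B"
  shows "((1 - B^2) * w / D)^2 \<le> (2 - w)^2"
proof -
  have "0 < (1-B)^2" using assms by simp
  then have Dp: "D > 0" using assms by linarith
  have "(1 - B^2) * w \<le> (1-B)^2 * (2 - w)"
  proof -
    have "(1-B)^2 * (2 - w) - (1 - B^2) * w = (1-B) * (2 - 2*B - 2*w)"
      by (simp add: power2_eq_square algebra_simps)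
    moreover have "(1-B) * (2 - 2*B - 2*w) \<ge> 0" using assms by simp
    ultimately show ?thesis by linarith
  qed
  also have "\<dots> \<le> D * (2 - w)" using assms by (intro mult_right_mono) auto
  finally have "(1 - B^2) * w / D \<le> 2 - w" using Dp by (simp add: divide_simps mult.commute)
  moreover have "0 \<le> (1 - B^2) * w / D" using assms Dp by (simp add: abs_square_le_1)
  ultimately show ?thesis by (rule power_mono)
qed


theorem proposition3p4:
  fixes B H :: real
  assumes "0 < B" "B < 1" "0 < H"
  defines "s0 \<equiv> arccos B / H"
      and "z0 \<equiv> (1 - B^2) / (H * B)"
  shows "(uz B H s0 < z0 \<longrightarrow> (\<forall>s\<in>{0<..<s0}. ug B H s > 0))
       \<and> (uz B H s0 \<ge> z0 \<longrightarrow>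
           (\<exists>sb\<in>{0<..s0}. ug B H sb = 0 \<and> ug B H (- sb) = 0 \<and>
              (let R0 = sqrt ((ux B H sb)^2 + (uz B H sb)^2);
                   X = rot_surf (ux B H) (uz B H);
                   N = rot_normal (ux B H) (uz B H) in
               free_boundary_CMC_annulus X N H (- sb) sb R0 \<and>
               (\<forall>s\<in>{-sb..sb}. \<forall>\<theta>.
                  Phi_sq X N (s,\<theta>) * (X (s,\<theta>) \<bullet> N (s,\<theta>))^2
                    \<le> (1/2) * (2 + H * (X (s,\<theta>) \<bullet> N (s,\<theta>)))^2))))"
proof -
  interpret und B H using assms by unfold_locales
  have s0p: "s0 > 0" unfolding s0_def using arccos_facts assms by simp
  have z0B: "z0 * B = (1 - B^2) / H" unfolding z0_def using assms by (simp add: field_simps)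
  have ps0: "phi s0 = (1 - B^2) / H - B * uz B H s0" unfolding s0_def by (rule phi_s0)
  have key: "uz B H s0 < z0 \<longleftrightarrow> phi s0 > 0"
  proof -
    have "uz B H s0 < z0 \<longleftrightarrow> B * uz B H s0 < B * z0" using assms(1) by simp
    also have "\<dots> \<longleftrightarrow> phi s0 > 0" using ps0 z0B by (simp add: mult.commute)
    finally show ?thesis .
  qed
  have phi0p: "phi 0 > 0" using phi0 assms by simp
  show ?thesis
  proof (intro conjI impI)
    assume "uz B H s0 < z0"
    then have p: "phi s0 > 0" using key by simp
    show "\<forall>s\<in>{0<..<s0}. ug B H s > 0"
    proof
      fix s assume s: "s \<in> {0<..<s0}"
      have "phi s > phi s0" using s unfolding s0_def by (intro phi_decr) auto
      then show "ug B H s > 0" using p z1_pos[of s] by (simp add: ug_eq)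
    qed
  next
    assume "uz B H s0 \<ge> z0"
    then have p: "phi s0 \<le> 0" using key by simp
    obtain sb where sb: "0 \<le> sb" "sb \<le> s0" "phi sb = 0"
      using IVT2'[of phi s0 0 0, OF p less_imp_le[OF phi0p] less_imp_le[OF s0p] phi_cont] by auto
    have sbp: "sb > 0" using sb phi0p by (cases "sb = 0") auto
    have sbs0: "sb \<le> arccos B / H" using sb s0_def by simp
    define R0 where "R0 = sqrt ((ux B H sb)^2 + (uz B H sb)^2)"
    have phib: "0 \<le> phi s \<and> phi s \<le> (1 - B) / H" if "s \<in> {-sb..sb}" for s
    proof -
      have e: "phi s = phi \<bar>s\<bar>" by (cases "s \<ge> 0") (auto simp: phi_even)
      have a: "\<bar>s\<bar> \<le> sb" using that by auto
      show ?thesis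
      proof (cases "\<bar>s\<bar> = 0")
        case True then show ?thesis using e phi0 assms by simp
      next
        case False
        have "phi \<bar>s\<bar> < phi 0" by (rule phi_decr) (use False a sbs0 in auto)
        moreover have "phi \<bar>s\<bar> \<ge> phi sb"
        proof (cases "\<bar>s\<bar> = sb")
          case False show ?thesis by (rule less_imp_le, rule phi_decr) (use False a sbs0 in auto)
        qed simp
        ultimately show ?thesis using e sb phi0 by simp
      qed
    qed
    have fb: "free_boundary_CMC_annulus XX NN H (- sb) sb R0"
      unfolding free_boundary_CMC_annulus_def
    proof (intro conjI ballI allI)
      show "- sb < sb" using sbp by simp
      show "R0 > 0" unfolding R0_def using ux_pos[of sb] by (intro real_sqrt_gt_zero add_pos_nonneg) auto
      show "XX (s, t + 2*pi) = XX (s,t)" for s t by (rule X_periodic)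
      show "inj_on XX ({- sb..sb} \<times> {0..<2 * pi})" by (rule X_inj)
      fix s t
      show "C2_at XX (s,t)" by (rule C2)
      show "cross3 (dS XX (s,t)) (dT XX (s,t)) \<noteq> 0" by (rule cross_nz)
      show "norm (NN (s,t)) = 1" by (rule normN)
      show "NN (s,t) \<bullet> dS XX (s,t) = 0" "NN (s,t) \<bullet> dT XX (s,t) = 0" by (rule N_perp)+
      show "mean_curv XX NN (s,t) = H" by (rule mean_H)
    next
      fix s t assume s: "s \<in> {- sb<..<sb}"
      have "(ux B H s)^2 + (uz B H s)^2 < (ux B H sb)^2 + (uz B H sb)^2"
      proof -
        have "(ux B H s)^2 + (uz B H s)^2 = (ux B H \<bar>s\<bar>)^2 + (uz B H \<bar>s\<bar>)^2"
          by (cases "s \<ge> 0") (auto simp: psi_even)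
        also have "\<dots> < (ux B H sb)^2 + (uz B H sb)^2" using s sbs0 by (intro psi_incr) auto
        finally show ?thesis .
      qed
      then show "norm (XX (s,t)) < R0" unfolding normX R0_def by simp
    next
      fix s t assume s: "s \<in> {- sb, sb}"
      show "norm (XX (s,t)) = R0" using s unfolding normX R0_def by (auto simp: psi_even)
      show "XX (s,t) \<bullet> NN (s,t) = 0" using s sb unfolding XN by (auto simp: phi_even)
    qed
    have ineq: "Phi_sq XX NN (s,\<theta>) * (XX (s,\<theta>) \<bullet> NN (s,\<theta>))^2
                    \<le> (1/2) * (2 + H * (XX (s,\<theta>) \<bullet> NN (s,\<theta>)))^2" if s: "s \<in> {-sb..sb}" for s \<theta>
    proof -
      have w: "0 \<le> H * phi s" "H * phi s \<le> 1 - B" using phib[OF s] assms by (auto simp: field_simps)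
      have "((1 - B^2) * (H * phi s) / Dd B H s)^2 \<le> (2 - H * phi s)^2"
        by (rule final_ineq[OF assms(1,2) Dd_ge w])
      moreover have "Phi_sq XX NN (s,\<theta>) * (XX (s,\<theta>) \<bullet> NN (s,\<theta>))^2 = ((1 - B^2) * (H * phi s) / Dd B H s)^2 / 2"
        unfolding Phi_eq XN by (simp add: power2_eq_square field_simps)
      moreover have "(1/2) * (2 + H * (XX (s,\<theta>) \<bullet> NN (s,\<theta>)))^2 = (2 - H * phi s)^2 / 2"
        unfolding XN by simp
      ultimately show ?thesis by simp
    qed
    show "\<exists>sb\<in>{0<..s0}. ug B H sb = 0 \<and> ug B H (- sb) = 0 \<and>
              (let R0 = sqrt ((ux B H sb)^2 + (uz B H sb)^2);
                   X = rot_surf (ux B H) (uz B H);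
                   N = rot_normal (ux B H) (uz B H) in
               free_boundary_CMC_annulus X N H (- sb) sb R0 \<and>
               (\<forall>s\<in>{-sb..sb}. \<forall>\<theta>.
                  Phi_sq X N (s,\<theta>) * (X (s,\<theta>) \<bullet> N (s,\<theta>))^2
                    \<le> (1/2) * (2 + H * (X (s,\<theta>) \<bullet> N (s,\<theta>)))^2))"
    proof (rule bexI[of _ sb])
      show "sb \<in> {0<..s0}" using sbp sb by simp
      show "ug B H sb = 0 \<and> ug B H (- sb) = 0 \<and>
              (let R0 = sqrt ((ux B H sb)^2 + (uz B H sb)^2);
                   X = rot_surf (ux B H) (uz B H);
                   N = rot_normal (ux B H) (uz B H) in
               free_boundary_CMC_annulus X N H (- sb) sb R0 \<and>
               (\<forall>s\<in>{-sb..sb}. \<forall>\<theta>.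
                  Phi_sq X N (s,\<theta>) * (X (s,\<theta>) \<bullet> N (s,\<theta>))^2
                    \<le> (1/2) * (2 + H * (X (s,\<theta>) \<bullet> N (s,\<theta>)))^2))"
        unfolding Let_def R0_def[symmetric]
        using fb ineq sb by (simp add: ug_eq phi_even)
    qed
  qed
qed

end
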